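(* There is an absolute constant $C$ such that for every odd prime $p$ and all integers $m,D\ge1$ with $n=Dm+1$, the state $$|\psi\rangle=\Big(\big(M_{m,\pi/p}^\dagger\big)^{\otimes D}\otimes e^{-i\pi X/4}\Big)H^{\otimes n}|\mathrm{GHZ}_n\rangle,$$ measured in the computational basis, yields a distribution $P_\psi$ on $\{0,1\}^{n-1}\times\{0,1\}$ with $$\Delta\big(P_\psi,(X,\mathrm{majmod}_p(X)\oplus\mathrm{parity}(X))\big)\le\tfrac12-\tfrac1\pi+\tfrac1{2p}+Cp^{3/2}e^{-n/p^2},$$ $X$ uniform on $\{0,1\}^{n-1}$.
   Context: $|\mathrm{GHZ}_n\rangle=(|0^n\rangle+|1^n\rangle)/\sqrt2$; $H$ Hadamard; $X$ Pauli-$X$. $M_{m,\theta}$ is the $m$-qubit operator with $M_{m,\theta}|x_1\cdots x_m\rangle=\bigotimes_{j=1}^m e^{-i\theta x_{j-1}X}|x_j\rangle$ (indices mod $m$, $x_0=x_m$); the $D$ copies act on consecutive blocks of $m$ qubits among the first $n-1$. Measurement of a nonzero vector gives outcome $z$ with probability $|\langle z|\psi\rangle|^2/\|\psi\|^2$. $\mathrm{parity}(x)=|x|\bmod2$; $\mathrm{majmod}_p(x)=0$ if $(|x|\bmod p)<p/2$, else $1$. $\Delta$ is total variation distance. *)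

theory Defs
  imports Complex_Main "HOL-Computational_Algebra.Primes"
begin

text \<open>Computational basis states of n qubits are bit strings (bool lists) of length n;
  qubit j is list position j (0-indexed). An n-qubit operator is given by its matrix
  entries A y x = <y|A|x>; a state is an amplitude function on bit strings.\<close>

definition bits :: "nat \<Rightarrow> bool list set" where
  "bits n = {x. length x = n}"

definition apply_op :: "nat \<Rightarrow> (bool list \<Rightarrow> bool list \<Rightarrow> complex) \<Rightarrow> (bool list \<Rightarrow> complex)
    \<Rightarrow> bool list \<Rightarrow> complex" where
  "apply_op n A \<psi> y = (\<Sum>x\<in>bits n. A y x * \<psi> x)"

definition ghz :: "nat \<Rightarrow> bool list \<Rightarrow> complex" where
  "ghz n x = (if x = replicate n False \<or> x = replicate n True
              then complex_of_real (1 / sqrt 2) else 0)"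

definition bitval :: "bool \<Rightarrow> real" where
  "bitval b = (if b then 1 else 0)"

definition hadamard :: "bool \<Rightarrow> bool \<Rightarrow> complex" where
  "hadamard c a = complex_of_real ((if c \<and> a then -1 else 1) / sqrt 2)"

text \<open>exp(-i theta X) = cos theta I - i sin theta X.\<close>
definition expX :: "real \<Rightarrow> bool \<Rightarrow> bool \<Rightarrow> complex" where
  "expX \<theta> c a = (if c = a then complex_of_real (cos \<theta>) else - \<i> * complex_of_real (sin \<theta>))"

definition tensor_pow :: "nat \<Rightarrow> (bool \<Rightarrow> bool \<Rightarrow> complex) \<Rightarrow> bool list \<Rightarrow> bool list \<Rightarrow> complex" where
  "tensor_pow n G y x = (\<Prod>j<n. G (y ! j) (x ! j))"

text \<open>M_{m,theta}|x_1..x_m> = tensor_j exp(-i theta x_{j-1} X)|x_j>, indices cyclic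
  (0-indexed: control of qubit j is qubit (j-1) mod m).\<close>
definition M_op :: "nat \<Rightarrow> real \<Rightarrow> bool list \<Rightarrow> bool list \<Rightarrow> complex" where
  "M_op m \<theta> y x = (\<Prod>j<m. expX (\<theta> * bitval (x ! ((j + m - 1) mod m))) (y ! j) (x ! j))"

definition dagger :: "(bool list \<Rightarrow> bool list \<Rightarrow> complex) \<Rightarrow> bool list \<Rightarrow> bool list \<Rightarrow> complex" where
  "dagger A y x = cnj (A x y)"

text \<open>A^{tensor D} on D consecutive blocks of m qubits, tensored with single-qubit G on
  the last qubit (index D*m).\<close>
definition blocks_op :: "nat \<Rightarrow> nat \<Rightarrow> (bool list \<Rightarrow> bool list \<Rightarrow> complex)
    \<Rightarrow> (bool \<Rightarrow> bool \<Rightarrow> complex) \<Rightarrow> bool list \<Rightarrow> bool list \<Rightarrow> complex" where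
  "blocks_op D m A G y x =
     (\<Prod>k<D. A (take m (drop (k * m) y)) (take m (drop (k * m) x))) * G (y ! (D * m)) (x ! (D * m))"

definition psi :: "nat \<Rightarrow> nat \<Rightarrow> nat \<Rightarrow> bool list \<Rightarrow> complex" where
  "psi p m D = (let n = D * m + 1 in
     apply_op n (blocks_op D m (dagger (M_op m (pi / real p))) (expX (pi / 4)))
       (apply_op n (tensor_pow n hadamard) (ghz n)))"

definition meas_prob :: "nat \<Rightarrow> (bool list \<Rightarrow> complex) \<Rightarrow> bool list \<Rightarrow> real" where
  "meas_prob n \<psi> z = (cmod (\<psi> z))\<^sup>2 / (\<Sum>w\<in>bits n. (cmod (\<psi> w))\<^sup>2)"

definition hw :: "bool list \<Rightarrow> nat" where
  "hw x = length (filter id x)"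

definition parity :: "bool list \<Rightarrow> bool" where
  "parity x = odd (hw x)"

definition majmod :: "nat \<Rightarrow> bool list \<Rightarrow> bool" where
  "majmod p x = (\<not> (real (hw x mod p) < real p / 2))"

text \<open>Distribution of (X, majmod_p(X) xor parity(X)) with X uniform on {0,1}^{n-1},
  as a distribution on strings z of length n (first n-1 bits = X, last bit = second component).\<close>
definition target_dist :: "nat \<Rightarrow> nat \<Rightarrow> bool list \<Rightarrow> real" where
  "target_dist p n z = (if z ! (n - 1) = (majmod p (take (n - 1) z) \<noteq> parity (take (n - 1) z))
                        then 1 / 2 ^ (n - 1) else 0)"

definition tv_dist :: "nat \<Rightarrow> (bool list \<Rightarrow> real) \<Rightarrow> (bool list \<Rightarrow> real) \<Rightarrow> real" where
  "tv_dist n P Q = (1 / 2) * (\<Sum>z\<in>bits n. \<bar>P z - Q z\<bar>)"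

end

theory Submission
  imports Defs
begin


lemma sin_lower: "0 \<le> (x::real) \<Longrightarrow> x - x^3/6 \<le> sin x"
proof -
  assume x0: "0 \<le> x"
  have "\<bar>sin x - (\<Sum>m<3. sin_coeff m * x ^ m)\<bar> \<le> inverse (fact 3) * \<bar>x\<bar> ^ 3"
    by (rule Maclaurin_sin_bound)
  moreover have "(\<Sum>m<3. sin_coeff m * x ^ m) = x"
    by (simp add: eval_nat_numeral sin_coeff_def)
  moreover have "inverse (fact 3) * \<bar>x\<bar> ^ 3 = x^3/(6::real)"
    using x0 by (simp add: eval_nat_numeral fact_numeral)
  ultimately show "x - x^3/6 \<le> sin x" by linarith
qed

lemma cos_upper:
  fixes p :: nat assumes "p \<ge> 3"
  shows "cos (pi / p) \<le> 1 - 1 / (real p)^2"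
proof -
  define y where "y = pi / (2 * p)"
  have p3: "real p \<ge> 3" using assms by simp
  have y0: "0 < y" using p3 by (simp add: y_def)
  have y1: "y \<le> pi / 6" unfolding y_def using p3 by (simp add: field_simps)
  have y67: "y \<le> 67/100" using y1 pi_less_4 by linarith
  have yy: "y^2 \<le> 45/100"
  proof -
    have "y^2 \<le> (67/100)^2" using y0 y67 by (intro power_mono) auto
    thus ?thesis by (simp add: power2_eq_square)
  qed
  have s: "sin y \<ge> y - y^3/6" using sin_lower[of y] y0 by simp
  have "y - y^3/6 = y * (1 - y^2/6)" by (simp add: algebra_simps power3_eq_cube power2_eq_square)
  also have "\<dots> \<ge> y * (925/1000)" using yy y0 by (intro mult_left_mono) auto
  finally have s2: "sin y \<ge> (925/1000) * y" using s by simp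
  have "cos (pi / p) = cos (2*y)" by (simp add: y_def)
  also have "\<dots> = 1 - 2 * (sin y)^2" by (simp add: cos_double_sin)
  also have "(sin y)^2 \<ge> ((925/1000)*y)^2" using s2 y0 by (intro power_mono) auto
  hence "1 - 2 * (sin y)^2 \<le> 1 - 2 * ((925/1000)*y)^2" by simp
  also have "2 * ((925/1000)*y)^2 = (171125/100000) * pi^2 / (4 * (real p)^2)" by (simp add: y_def power2_eq_square field_simps)
  finally have c1: "cos (pi / p) \<le> 1 - (171125/100000) * pi^2 / (4 * (real p)^2)" .
  have "pi^2 \<ge> 4" using pi_ge_two power_mono[of 2 pi 2] by simp
  hence "(171125/100000) * pi^2 / (4 * (real p)^2) \<ge> 1 / (real p)^2" using p3 by (simp add: field_simps)
  with c1 show ?thesis by linarith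
qed

lemma cos_lower: "0 \<le> (y::real) \<Longrightarrow> y \<le> 2 \<Longrightarrow> 1 - y \<le> cos y"
proof -
  assume a: "0 \<le> y" "y \<le> 2"
  have "cos y = 1 - 2 * (sin (y/2))^2" using cos_double_sin[of "y/2"] by simp
  moreover have "(sin (y/2))^2 \<le> (y/2)^2"
    using abs_sin_x_le_abs_x[of "y/2"] a by (metis abs_le_square_iff)
  moreover have "y * y \<le> 2 * y" using a by (intro mult_right_mono) auto
  hence "2 * (y/2)^2 \<le> y" by (simp add: power2_eq_square field_simps)
  ultimately show ?thesis by linarith
qed



lemma finite_bits[simp]: "finite (bits n)"
proof -
  have "bits n = {xs. set xs \<subseteq> (UNIV::bool set) \<and> length xs = n}" by (auto simp: bits_def)
  thus ?thesis using finite_lists_length_eq[of "UNIV::bool set" n] by simp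
qed

lemma card_bits: "card (bits n) = 2 ^ n"
proof -
  have "bits n = {xs. set xs \<subseteq> (UNIV::bool set) \<and> length xs = n}" by (auto simp: bits_def)
  thus ?thesis using card_lists_length_eq[of "UNIV::bool set" n] by simp
qed

lemma bits_Suc: "bits (Suc n) = (\<lambda>(x,b). x @ [b]) ` (bits n \<times> UNIV)"
proof
  show "bits (Suc n) \<subseteq> (\<lambda>(x,b). x @ [b]) ` (bits n \<times> UNIV)"
  proof
    fix z assume "z \<in> bits (Suc n)"
    hence l: "length z = Suc n" by (simp add: bits_def)
    hence "z = butlast z @ [last z]" by (metis append_butlast_last_id list.size(3) nat.distinct(1))
    moreover have "butlast z \<in> bits n" using l by (simp add: bits_def)
    ultimately show "z \<in> (\<lambda>(x,b). x @ [b]) ` (bits n \<times> UNIV)" by force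
  qed
qed (auto simp: bits_def)

lemma sum_bits_Suc:
  "(\<Sum>z\<in>bits (Suc n). F z) = (\<Sum>x\<in>bits n. F (x @ [False]) + F (x @ [True]))"
proof -
  have inj: "inj_on (\<lambda>(x,b). x @ [b]) (bits n \<times> (UNIV::bool set))"
    by (auto simp: inj_on_def)
  have "(\<Sum>z\<in>bits (Suc n). F z) = (\<Sum>(x,b)\<in>bits n \<times> UNIV. F (x @ [b]))"
    unfolding bits_Suc by (subst sum.reindex[OF inj]) (simp add: case_prod_beta')
  also have "\<dots> = (\<Sum>x\<in>bits n. \<Sum>b\<in>UNIV. F (x @ [b]))"
    by (simp add: sum.cartesian_product)
  also have "\<dots> = (\<Sum>x\<in>bits n. F (x @ [False]) + F (x @ [True]))"
    by (simp add: UNIV_bool)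
  finally show ?thesis .
qed

lemma sum_prod_bits:
  fixes h :: "nat \<Rightarrow> bool \<Rightarrow> 'a::comm_semiring_1"
  shows "(\<Sum>x\<in>bits n. \<Prod>j<n. h j (x ! j)) = (\<Prod>j<n. h j False + h j True)"
proof (induction n)
  case 0
  have "bits 0 = {[]}" by (auto simp: bits_def)
  thus ?case by simp
next
  case (Suc n)
  have e: "(\<Prod>j<Suc n. h j ((x @ [b]) ! j)) = (\<Prod>j<n. h j (x ! j)) * h n b" if "x \<in> bits n" for x b
  proof -
    have l: "length x = n" using that by (simp add: bits_def)
    have "(\<Prod>j<n. h j ((x @ [b]) ! j)) = (\<Prod>j<n. h j (x ! j))"
      by (rule prod.cong) (auto simp: l nth_append)
    thus ?thesis by (simp add: l[symmetric])
  qed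
  have "(\<Sum>x\<in>bits (Suc n). \<Prod>j<Suc n. h j (x ! j))
      = (\<Sum>x\<in>bits n. (\<Prod>j<n. h j (x ! j)) * (h n False + h n True))"
    unfolding sum_bits_Suc by (rule sum.cong) (auto simp del: prod.lessThan_Suc simp add: e distrib_left)
  also have "\<dots> = (\<Prod>j<n. h j False + h j True) * (h n False + h n True)"
    by (simp add: sum_distrib_right[symmetric] Suc.IH)
  finally show ?case by simp
qed

lemma hw_append[simp]: "hw (x @ [b]) = hw x + (if b then 1 else 0)"
  by (simp add: hw_def)

lemma prod_hw: "(\<Prod>j<length xs. (if xs ! j then z else 1)) = (z::'a::comm_monoid_mult) ^ hw xs"
proof (induction xs rule: rev_induct)
  case Nil thus ?case by (simp add: hw_def)
next
  case (snoc b xs)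
  have "(\<Prod>j<length xs. (if (xs @ [b]) ! j then z else 1)) = (\<Prod>j<length xs. (if xs ! j then z else 1))"
    by (rule prod.cong) (auto simp: nth_append)
  thus ?case using snoc by (simp add: power_add)
qed

lemma sum_hw: "(\<Sum>j<length xs. bitval (xs ! j)) = real (hw xs)"
proof (induction xs rule: rev_induct)
  case Nil thus ?case by (simp add: hw_def)
next
  case (snoc b xs)
  have "(\<Sum>j<length xs. bitval ((xs @ [b]) ! j)) = (\<Sum>j<length xs. bitval (xs ! j))"
    by (rule sum.cong) (auto simp: nth_append)
  thus ?case using snoc by (simp add: bitval_def)
qed

lemma prod_regroup:
  fixes F :: "nat \<Rightarrow> 'a::comm_monoid_mult"
  shows "(\<Prod>i<D*m. F i) = (\<Prod>k<D. \<Prod>j<m. F (k*m+j))"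
proof (induction D)
  case 0 thus ?case by simp
next
  case (Suc D)
  have "(\<Prod>i<Suc D*m. F i) = (\<Prod>i\<in>{0..<D*m+m}. F i)" by (simp add: atLeast0LessThan add.commute)
  also have "\<dots> = (\<Prod>i\<in>{0..<D*m}. F i) * (\<Prod>i\<in>{D*m..<D*m+m}. F i)"
    by (rule prod.atLeastLessThan_concat[symmetric]) auto
  also have "(\<Prod>i\<in>{D*m..<D*m+m}. F i) = (\<Prod>j<m. F (D*m+j))"
    using prod.shift_bounds_nat_ivl[of F 0 "D*m" m]
    by (simp add: atLeast0LessThan add.commute)
  finally show ?case using Suc by (simp add: atLeast0LessThan)
qed

lemma sum_regroup:
  fixes F :: "nat \<Rightarrow> 'a::comm_monoid_add"
  shows "(\<Sum>i<D*m. F i) = (\<Sum>k<D. \<Sum>j<m. F (k*m+j))"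
proof (induction D)
  case 0 thus ?case by simp
next
  case (Suc D)
  have "(\<Sum>i<Suc D*m. F i) = (\<Sum>i\<in>{0..<D*m+m}. F i)" by (simp add: atLeast0LessThan add.commute)
  also have "\<dots> = (\<Sum>i\<in>{0..<D*m}. F i) + (\<Sum>i\<in>{D*m..<D*m+m}. F i)"
    by (rule sum.atLeastLessThan_concat[symmetric]) auto
  also have "(\<Sum>i\<in>{D*m..<D*m+m}. F i) = (\<Sum>j<m. F (D*m+j))"
    using sum.shift_bounds_nat_ivl[of F 0 "D*m" m]
    by (simp add: atLeast0LessThan add.commute)
  finally show ?case using Suc by (simp add: atLeast0LessThan)
qed



definition sgn_b :: "bool \<Rightarrow> complex" where "sgn_b a = (if a then -1 else 1)"

lemma ghz_prod:
  assumes "x \<in> bits n" "n \<ge> 1"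
  shows "ghz n x = complex_of_real (1 / sqrt 2) *
     ((\<Prod>j<n. (if x ! j then 0 else 1)) + (\<Prod>j<n. (if x ! j then 1 else 0)))"
proof -
  have l: "length x = n" using assms by (simp add: bits_def)
  have pF: "(\<Prod>j<n. (if x ! j then 0 else 1::complex)) = (if x = replicate n False then 1 else 0)"
  proof (cases "x = replicate n False")
    case True thus ?thesis by simp
  next
    case False
    then obtain j where "j < n" "x ! j" using l by (metis (full_types) list_eq_iff_nth_eq length_replicate nth_replicate)
    thus ?thesis using False by (auto intro!: prod_zero)
  qed
  have pT: "(\<Prod>j<n. (if x ! j then 1 else 0::complex)) = (if x = replicate n True then 1 else 0)"
  proof (cases "x = replicate n True")
    case True thus ?thesis by simp
  next
    case False
    then obtain j where "j < n" "\<not> x ! j" using l by (metis (full_types) list_eq_iff_nth_eq length_replicate nth_replicate)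
    thus ?thesis using False by (auto intro!: prod_zero)
  qed
  have ne: "replicate n False \<noteq> replicate n True" using assms(2) by (cases n) auto
  show ?thesis unfolding ghz_def pF pT using ne by auto
qed

lemma H_state:
  assumes "x \<in> bits n" "n \<ge> 1"
  shows "apply_op n (tensor_pow n hadamard) (ghz n) x
    = complex_of_real ((1 / sqrt 2) ^ (n+1)) * (1 + (-1) ^ hw x)"
proof -
  have l: "length x = n" using assms by (simp add: bits_def)
  let ?r = "complex_of_real (1 / sqrt 2)"
  have "apply_op n (tensor_pow n hadamard) (ghz n) x
     = (\<Sum>x'\<in>bits n. ?r * ((\<Prod>j<n. hadamard (x!j) (x'!j) * (if x' ! j then 0 else 1))
                             + (\<Prod>j<n. hadamard (x!j) (x'!j) * (if x' ! j then 1 else 0))))"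
    unfolding apply_op_def tensor_pow_def
    by (rule sum.cong) (auto simp: ghz_prod[OF _ assms(2)] prod.distrib algebra_simps)
  also have "\<dots> = ?r * ((\<Prod>j<n. hadamard (x!j) False) + (\<Prod>j<n. hadamard (x!j) True))"
  proof -
    have sF: "(\<Sum>x'\<in>bits n. \<Prod>j<n. hadamard (x!j) (x'!j) * (if x' ! j then 0 else 1)) = (\<Prod>j<n. hadamard (x!j) False)"
      using sum_prod_bits[of "\<lambda>j a. hadamard (x!j) a * (if a then 0 else 1)" n] by simp
    have sT: "(\<Sum>x'\<in>bits n. \<Prod>j<n. hadamard (x!j) (x'!j) * (if x' ! j then 1 else 0)) = (\<Prod>j<n. hadamard (x!j) True)"
      using sum_prod_bits[of "\<lambda>j a. hadamard (x!j) a * (if a then 1 else 0)" n] by simp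
    show ?thesis by (simp only: sum_distrib_left[symmetric] sum.distrib sF sT)
  qed
  also have "(\<Prod>j<n. hadamard (x!j) False) = ?r ^ n"
    by (simp add: hadamard_def)
  also have "(\<Prod>j<n. hadamard (x!j) True) = (\<Prod>j<n. ?r * (if x ! j then -1 else 1))"
    by (rule prod.cong) (auto simp: hadamard_def)
  also have "\<dots> = ?r ^ n * (-1) ^ hw x"
    using prod_hw[of x "-1::complex"] unfolding prod.distrib prod_constant card_lessThan l by simp
  finally show ?thesis by (simp add: algebra_simps power_Suc add_divide_distrib)
qed



definition ctl :: "nat \<Rightarrow> nat \<Rightarrow> nat" where
  "ctl m i = (i div m) * m + ((i mod m) + m - 1) mod m"

definition hh :: "nat \<Rightarrow> real \<Rightarrow> nat \<Rightarrow> bool list \<Rightarrow> nat \<Rightarrow> bool \<Rightarrow> complex" where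
  "hh m \<theta> N y i a = (if i < N then cnj (expX (\<theta> * bitval (y ! ctl m i)) a (y ! i))
                       else expX (pi/4) (y ! N) a)"

lemma Bfact:
  assumes m: "m \<ge> 1" and y: "y \<in> bits (D*m+1)" and x: "x \<in> bits (D*m+1)"
  shows "blocks_op D m (dagger (M_op m \<theta>)) (expX (pi/4)) y x = (\<Prod>i<D*m+1. hh m \<theta> (D*m) y i (x!i))"
proof -
  have ly: "length y = D*m+1" and lx: "length x = D*m+1" using x y by (auto simp: bits_def)
  define F where "F i = cnj (expX (\<theta> * bitval (y ! ctl m i)) (x ! i) (y ! i))" for i
  have blk: "dagger (M_op m \<theta>) (take m (drop (k * m) y)) (take m (drop (k * m) x)) = (\<Prod>j<m. F (k*m+j))"
    if k: "k < D" for k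
  proof -
    have kl: "k*m \<le> D*m" using k by (intro mult_le_mono1) simp
    show ?thesis unfolding dagger_def M_op_def cnj_prod
    proof (rule prod.cong[OF refl])
      fix j assume "j \<in> {..<m}"
      hence j: "j < m" by simp
      have c: "(j + m - 1) mod m < m" using m by simp
      have dm: "(k*m+j) div m = k" "(k*m+j) mod m = j" using j by auto
      have cc: "ctl m (k*m+j) = k*m + (j + m - 1) mod m" unfolding ctl_def dm by simp
      show "cnj (expX (\<theta> * bitval (take m (drop (k * m) y) ! ((j + m - 1) mod m)))
                 (take m (drop (k * m) x) ! j) (take m (drop (k * m) y) ! j)) = F (k * m + j)"
      proof -
        have a1: "k*m \<le> length y" "k*m \<le> length x" using kl ly lx by linarith+
        show ?thesis unfolding F_def using j c by (simp add: nth_take nth_drop[OF a1(1)] nth_drop[OF a1(2)] cc)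
      qed
    qed
  qed
  have "blocks_op D m (dagger (M_op m \<theta>)) (expX (pi/4)) y x
      = (\<Prod>k<D. \<Prod>j<m. F (k*m+j)) * expX (pi/4) (y ! (D*m)) (x ! (D*m))"
    unfolding blocks_op_def by (simp add: blk)
  also have "(\<Prod>k<D. \<Prod>j<m. F (k*m+j)) = (\<Prod>i<D*m. F i)" by (rule prod_regroup[symmetric])
  also have "(\<Prod>i<D*m. F i) = (\<Prod>i<D*m. hh m \<theta> (D*m) y i (x!i))"
    by (rule prod.cong) (auto simp: F_def hh_def)
  finally show ?thesis by (simp add: hh_def)
qed



lemma cis_eq: "cis a = complex_of_real (cos a) + \<i> * complex_of_real (sin a)"
  by (simp add: complex_eq_iff)

lemma hh_sum:
  "i < N \<Longrightarrow> hh m \<theta> N y i False + hh m \<theta> N y i True = cis (\<theta> * bitval (y ! ctl m i))"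
  "i < N \<Longrightarrow> hh m \<theta> N y i False - hh m \<theta> N y i True = sgn_b (y ! i) * cis (-(\<theta> * bitval (y ! ctl m i)))"
  "hh m \<theta> N y N False + hh m \<theta> N y N True = cis (-(pi/4))"
  "hh m \<theta> N y N False - hh m \<theta> N y N True = sgn_b (y ! N) * cis (pi/4)"
  by (auto simp: hh_def expX_def cis_eq sgn_b_def)

lemma prod_cis: "finite A \<Longrightarrow> (\<Prod>i\<in>A. cis (f i)) = cis (\<Sum>i\<in>A. f i)"
  by (induction A rule: finite_induct) (auto simp: cis_mult)

lemma sum_rot:
  fixes m :: nat assumes "m \<ge> 1" shows "(\<Sum>j<m. g ((j + m - 1) mod m)) = (\<Sum>j<m. (g j :: 'a::comm_monoid_add))"
proof -
  obtain m' where m': "m = Suc m'" using assms by (cases m) auto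
  have "(\<Sum>j<m. g ((j + m - 1) mod m)) = g m' + (\<Sum>j<m'. g ((Suc j + m - 1) mod m))"
    unfolding m' sum.lessThan_Suc_shift by simp
  also have "(\<Sum>j<m'. g ((Suc j + m - 1) mod m)) = (\<Sum>j<m'. g j)"
  proof (rule sum.cong[OF refl])
    fix j assume "j \<in> {..<m'}"
    hence "j < m" using m' by simp
    moreover have "Suc j + m - 1 = j + m" using m' by simp
    ultimately have "(Suc j + m - 1) mod m = j" by simp
    thus "g ((Suc j + m - 1) mod m) = g j" by simp
  qed
  finally show ?thesis unfolding m' by (simp add: add.commute)
qed

lemma ctl_blk: "j < m \<Longrightarrow> ctl m (k*m+j) = k*m + (j + m - 1) mod m"
  unfolding ctl_def by simp

lemma sum_ctl:
  assumes "m \<ge> 1" shows "(\<Sum>i<D*m. f (ctl m i)) = (\<Sum>i<D*m. (f i :: real))"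
proof -
  have "(\<Sum>i<D*m. f (ctl m i)) = (\<Sum>k<D. \<Sum>j<m. f (ctl m (k*m+j)))" by (rule sum_regroup)
  also have "\<dots> = (\<Sum>k<D. \<Sum>j<m. f (k*m + (j + m - 1) mod m))"
    by (simp add: ctl_blk)
  also have "\<dots> = (\<Sum>k<D. \<Sum>j<m. f (k*m + j))"
    using sum_rot[OF assms, of "\<lambda>j. f (_ * m + j)"] by simp
  also have "\<dots> = (\<Sum>i<D*m. f i)" by (rule sum_regroup[symmetric])
  finally show ?thesis .
qed

lemma psi_formula:
  assumes m: "m \<ge> 1" and x: "x \<in> bits (D*m)"
  shows "psi p m D (x @ [b]) = complex_of_real ((1/sqrt 2)^(D*m+2)) *
     (cis (pi/p * hw x) * cis (-(pi/4)) + sgn_b b * (-1)^hw x * (cis (-(pi/p * hw x)) * cis (pi/4)))"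
proof -
  define N where "N = D*m"
  define n where "n = N+1"
  define y where "y = x @ [b]"
  define \<theta> where "\<theta> = pi / real p"
  define k0 where "k0 = complex_of_real ((1 / sqrt 2) ^ (n+1))"
  have lx: "length x = N" using x by (simp add: bits_def N_def)
  have y: "y \<in> bits n" using lx by (simp add: bits_def y_def n_def)
  have yi: "y ! i = x ! i" if "i < N" for i using that lx by (simp add: y_def nth_append)
  have yN: "y ! N = b" using lx by (simp add: y_def nth_append)
  have "psi p m D y = (\<Sum>x'\<in>bits n. (\<Prod>i<n. hh m \<theta> N y i (x'!i)) * (k0 * ((\<Prod>i<n. 1) + (\<Prod>i<n. sgn_b (x'!i)))))"
    unfolding psi_def Let_def apply_op_def
  proof (rule sum.cong)
    show "bits (D * m + 1) = bits n" by (simp add: n_def N_def)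
  next
    fix x' assume "x' \<in> bits n"
    hence x': "x' \<in> bits (D*m+1)" and lx': "length x' = n" by (auto simp: n_def N_def bits_def)
    have "(\<Prod>i<n. sgn_b (x'!i)) = (-1)^hw x'"
      using prod_hw[of x' "-1::complex"] lx' by (simp add: sgn_b_def)
    moreover have "(\<Sum>xa\<in>bits (D * m + 1). tensor_pow (D * m + 1) hadamard x' xa * ghz (D * m + 1) xa)
        = k0 * (1 + (-1)^hw x')"
      using H_state[OF x'] unfolding apply_op_def k0_def n_def N_def by simp
    ultimately show "blocks_op D m (dagger (M_op m (pi / real p))) (expX (pi / 4)) y x' *
          (\<Sum>xa\<in>bits (D * m + 1). tensor_pow (D * m + 1) hadamard x' xa * ghz (D * m + 1) xa) =
         (\<Prod>i<n. hh m \<theta> N y i (x' ! i)) * (k0 * ((\<Prod>i<n. 1) + (\<Prod>i<n. sgn_b (x' ! i))))"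
      using Bfact[OF m _ x', of y \<theta>] y by (simp add: n_def N_def \<theta>_def)
  qed
  also have "\<dots> = k0 * ((\<Sum>x'\<in>bits n. \<Prod>i<n. hh m \<theta> N y i (x'!i))
                  + (\<Sum>x'\<in>bits n. \<Prod>i<n. hh m \<theta> N y i (x'!i) * sgn_b (x'!i)))"
    by (simp add: sum_distrib_left sum.distrib prod.distrib algebra_simps)
  also have "\<dots> = k0 * ((\<Prod>i<n. hh m \<theta> N y i False + hh m \<theta> N y i True)
                  + (\<Prod>i<n. hh m \<theta> N y i False - hh m \<theta> N y i True))"
    using sum_prod_bits[of "\<lambda>i a. hh m \<theta> N y i a" n] sum_prod_bits[of "\<lambda>i a. hh m \<theta> N y i a * sgn_b a" n]
    by (simp add: sgn_b_def)
  also have "(\<Prod>i<n. hh m \<theta> N y i False + hh m \<theta> N y i True)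
      = (\<Prod>i<N. cis (\<theta> * bitval (y ! ctl m i))) * cis (-(pi/4))"
    unfolding n_def by (simp add: hh_sum)
  also have "(\<Prod>i<n. hh m \<theta> N y i False - hh m \<theta> N y i True)
      = (\<Prod>i<N. sgn_b (y ! i) * cis (-(\<theta> * bitval (y ! ctl m i)))) * (sgn_b (y ! N) * cis (pi/4))"
    unfolding n_def by (simp add: hh_sum)
  also have "(\<Prod>i<N. cis (\<theta> * bitval (y ! ctl m i))) = cis (\<theta> * hw x)"
  proof -
    have "(\<Sum>i<N. bitval (y ! ctl m i)) = (\<Sum>i<N. bitval (y ! i))"
      unfolding N_def by (rule sum_ctl[OF m])
    also have "\<dots> = (\<Sum>i<N. bitval (x ! i))" by (rule sum.cong) (auto simp: yi)
    also have "\<dots> = hw x" using sum_hw[of x] lx by simp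
    finally show ?thesis by (simp add: prod_cis sum_distrib_left[symmetric])
  qed
  also have "(\<Prod>i<N. sgn_b (y ! i) * cis (-(\<theta> * bitval (y ! ctl m i))))
      = (-1)^hw x * cis (-(\<theta> * hw x))"
  proof -
    have "(\<Sum>i<N. bitval (y ! ctl m i)) = (\<Sum>i<N. bitval (y ! i))"
      unfolding N_def by (rule sum_ctl[OF m])
    also have "\<dots> = (\<Sum>i<N. bitval (x ! i))" by (rule sum.cong) (auto simp: yi)
    also have "\<dots> = hw x" using sum_hw[of x] lx by simp
    finally have c: "(\<Prod>i<N. cis (-(\<theta> * bitval (y ! ctl m i)))) = cis (-(\<theta> * hw x))"
      by (simp add: prod_cis sum_distrib_left[symmetric] sum_negf)
    have "(\<Prod>i<N. sgn_b (y ! i)) = (\<Prod>i<N. sgn_b (x ! i))" by (rule prod.cong) (auto simp: yi)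
    also have "\<dots> = (-1)^hw x" using prod_hw[of x "-1::complex"] lx by (simp add: sgn_b_def)
    finally show ?thesis using c by (simp add: prod.distrib)
  qed
  finally show ?thesis using yN unfolding y_def[symmetric] k0_def n_def N_def \<theta>_def
    by (simp add: algebra_simps)
qed



lemma sg_val: "sgn_b b * (-1)^hw x = (if odd (hw x) = b then 1 else (-1::complex))"
  by (cases b) (auto simp: sgn_b_def)

lemma kr_sq: "((1 / sqrt 2) ^ k)\<^sup>2 = (1/2::real)^k"
proof -
  have "((1 / sqrt 2) ^ k)\<^sup>2 = ((1 / sqrt 2)\<^sup>2) ^ k" by (simp only: power_mult[symmetric] mult.commute)
  thus ?thesis by (simp add: power_divide)
qed

lemma psi_sq:
  assumes m: "m \<ge> 1" and x: "x \<in> bits (D*m)"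
  shows "(cmod (psi p m D (x @ [b])))\<^sup>2 = (1/2)^(D*m) *
     (if odd (hw x) = b then (cos (pi/p * hw x - pi/4))\<^sup>2 else (sin (pi/p * hw x - pi/4))\<^sup>2)"
proof -
  define \<beta> where "\<beta> = pi/p * hw x - pi/4"
  define kr where "kr = (1 / sqrt 2) ^ (D*m+2)"
  have e: "psi p m D (x @ [b]) = complex_of_real kr * (cis \<beta> + (if odd (hw x) = b then 1 else -1) * cis (-\<beta>))"
    unfolding psi_formula[OF m x] kr_def \<beta>_def
    by (simp add: cis_mult sg_val[symmetric] algebra_simps)
  have k2: "kr\<^sup>2 = (1/2)^(D*m) / 4" unfolding kr_def kr_sq by (simp add: power_add)
  show ?thesis
  proof (cases "odd (hw x) = b")
    case True
    have "psi p m D (x @ [b]) = complex_of_real (kr * (2 * cos \<beta>))"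
      using True unfolding e by (simp add: cis_eq complex_eq_iff)
    hence "cmod (psi p m D (x @ [b])) = \<bar>kr * (2 * cos \<beta>)\<bar>" by (simp only: norm_of_real)
    hence "(cmod (psi p m D (x @ [b])))\<^sup>2 = kr\<^sup>2 * 4 * (cos \<beta>)\<^sup>2"
      by (simp add: power_mult_distrib)
    thus ?thesis using True k2 by (simp add: \<beta>_def)
  next
    case False
    have "psi p m D (x @ [b]) = \<i> * complex_of_real (kr * (2 * sin \<beta>))"
      using False unfolding e by (simp add: cis_eq complex_eq_iff)
    hence "cmod (psi p m D (x @ [b])) = \<bar>kr * (2 * sin \<beta>)\<bar>" by (simp only: norm_mult norm_of_real) simp
    hence "(cmod (psi p m D (x @ [b])))\<^sup>2 = kr\<^sup>2 * 4 * (sin \<beta>)\<^sup>2"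
      by (simp add: power_mult_distrib)
    thus ?thesis using False k2 by (simp add: \<beta>_def)
  qed
qed



definition gfun :: "nat \<Rightarrow> nat \<Rightarrow> real" where
  "gfun p r = (if real r < real p / 2 then 1 else -1) * sin (2 * pi * real r / real p)"

lemma sin_mod:
  assumes "p > 0" shows "sin (2 * pi * real w / real p) = sin (2 * pi * real (w mod p) / real p)"
proof -
  have "real w = real p * real (w div p) + real (w mod p)"
    by (metis div_mult_mod_eq of_nat_add of_nat_mult mult.commute)
  hence "2 * pi * real w / real p = 2 * pi * real (w mod p) / real p + (2 * pi) * of_int (int (w div p))"
    using assms by (simp add: field_simps)
  thus ?thesis by (simp only: sin_add cos_int_2pin sin_int_2pin)
qed

lemma cos_sq_beta: "(cos (a - pi/4))\<^sup>2 = (1 + sin (2 * a)) / 2"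
proof -
  have "cos (2 * (a - pi/4)) = sin (2 * a)"
    by (simp add: right_diff_distrib cos_diff)
  moreover have "cos (2 * (a - pi/4)) = 2 * (cos (a - pi/4))\<^sup>2 - 1" by (rule cos_double_cos)
  ultimately show ?thesis by simp
qed

lemma sin_sq_beta: "(sin (a - pi/4))\<^sup>2 = (1 - sin (2 * a)) / 2"
proof -
  have h1: "(sin (a - pi/4))\<^sup>2 = 1 - (cos (a - pi/4))\<^sup>2" by (rule sin_squared_eq)
  show ?thesis unfolding h1 cos_sq_beta by (simp add: field_simps)
qed

lemma meas_sum_one:
  assumes m: "m \<ge> 1"
  shows "(\<Sum>w\<in>bits (D*m+1). (cmod (psi p m D w))\<^sup>2) = 1"
proof -
  have "(\<Sum>w\<in>bits (D*m+1). (cmod (psi p m D w))\<^sup>2)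
      = (\<Sum>x\<in>bits (D*m). (cmod (psi p m D (x @ [False])))\<^sup>2 + (cmod (psi p m D (x @ [True])))\<^sup>2)"
    using sum_bits_Suc by simp
  also have "\<dots> = (\<Sum>x\<in>bits (D*m). (1/2)^(D*m))"
    by (rule sum.cong[OF refl]) (auto simp: psi_sq[OF m] distrib_left[symmetric] sin_cos_squared_add2)
  also have "\<dots> = 1" by (simp add: card_bits power_one_over)
  finally show ?thesis .
qed

lemma per_x:
  assumes m: "m \<ge> 1" and x: "x \<in> bits (D*m)" and p: "p > 0"
  shows "\<bar>meas_prob (D*m+1) (psi p m D) (x @ [False]) - target_dist p (D*m+1) (x @ [False])\<bar>
       + \<bar>meas_prob (D*m+1) (psi p m D) (x @ [True]) - target_dist p (D*m+1) (x @ [True])\<bar>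
       = (1/2)^(D*m) * (1 - gfun p (hw x mod p))"
proof -
  have lx: "length x = D*m" using x by (simp add: bits_def)
  define s where "s = sin (2 * pi * real (hw x) / real p)"
  have s': "s = sin (2 * pi * real (hw x mod p) / real p)" unfolding s_def by (rule sin_mod[OF p])
  have c2: "(cos (pi/p * hw x - pi/4))\<^sup>2 = (1 + s)/2"
    unfolding cos_sq_beta s_def by (simp add: field_simps)
  have s2: "(sin (pi/p * hw x - pi/4))\<^sup>2 = (1 - s)/2"
    unfolding sin_sq_beta s_def by (simp add: field_simps)
  have P: "meas_prob (D*m+1) (psi p m D) (x @ [b]) = (1/2)^(D*m) * (if odd (hw x) = b then (1+s)/2 else (1-s)/2)" for b
    unfolding meas_prob_def meas_sum_one[OF m] psi_sq[OF m x] c2 s2 by simp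
  have Q: "target_dist p (D*m+1) (x @ [b]) = (if b = (majmod p x \<noteq> parity x) then (1/2)^(D*m) else 0)" for b
    unfolding target_dist_def using lx by (auto simp add: nth_append power_one_over)
  have g: "gfun p (hw x mod p) = (if majmod p x then - s else s)"
    unfolding gfun_def majmod_def s' by simp
  have s1: "\<bar>s\<bar> \<le> 1" unfolding s_def by simp
  define h :: real where "h = (1/2)^(D*m)"
  have h0: "h \<ge> 0" unfolding h_def by simp
  define bs where "bs = (majmod p x \<noteq> parity x)"
  define c where "c = (if majmod p x then (1-s)/2 else (1+s)/2)"
  have c01: "0 \<le> c" "c \<le> 1" using s1 unfolding c_def by (auto simp: abs_le_iff)
  let ?F = "\<lambda>b. \<bar>meas_prob (D*m+1) (psi p m D) (x @ [b]) - target_dist p (D*m+1) (x @ [b])\<bar>"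
  have key: "?F False + ?F True = ?F bs + ?F (\<not> bs)" by (cases bs) auto
  have Pb: "meas_prob (D*m+1) (psi p m D) (x @ [bs]) = h * c"
    unfolding P h_def c_def bs_def parity_def by auto
  have Pnb: "meas_prob (D*m+1) (psi p m D) (x @ [\<not> bs]) = h * (1 - c)"
    unfolding P h_def c_def bs_def parity_def by (auto simp: field_simps)
  have Qb: "target_dist p (D*m+1) (x @ [bs]) = h" unfolding Q h_def bs_def by simp
  have Qnb: "target_dist p (D*m+1) (x @ [\<not> bs]) = 0" unfolding Q h_def bs_def by simp
  have "?F bs + ?F (\<not> bs) = h * (1 - c) + h * (1 - c)"
  proof -
    have "h * c - h = - (h * (1 - c))" by (simp add: algebra_simps)
    moreover have "h * (1 - c) \<ge> 0" using h0 c01 by simp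
    ultimately show ?thesis unfolding Pb Pnb Qb Qnb by simp
  qed
  also have "\<dots> = h * (1 - gfun p (hw x mod p))" unfolding g c_def by (cases "majmod p x") (simp_all add: right_diff_distrib diff_divide_distrib add_divide_distrib)
  finally show ?thesis using key by (simp add: h_def)
qed



definition om :: "nat \<Rightarrow> complex" where "om p = cis (2 * pi / real p)"

lemma om_pow: "om p ^ j = cis (2 * pi * real j / real p)"
  unfolding om_def DeMoivre by (simp add: field_simps)

lemma om_p: "p > 0 \<Longrightarrow> om p ^ p = 1"
  unfolding om_pow by simp

lemma om_ne1: assumes "p > 0" "\<not> p dvd j" shows "om p ^ j \<noteq> 1"
proof
  assume "om p ^ j = 1"
  hence "cos (2 * pi * real j / real p) = 1" unfolding om_pow by (simp add: complex_eq_iff cis_eq)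
  then obtain n :: int where n: "2 * pi * real j / real p = n * 2 * pi" by (auto simp: cos_one_2pi_int)
  hence "real j = real_of_int n * real p" using assms(1) by (simp add: field_simps)
  hence "int j = n * int p" by (metis of_int_eq_iff of_int_mult of_int_of_nat_eq)
  hence "int p dvd int j" by simp
  thus False using assms(2) by simp
qed

lemma root_sum: assumes "p > 0"
  shows "(\<Sum>k<p. (om p ^ j) ^ k) = (if p dvd j then of_nat p else 0)"
proof (cases "p dvd j")
  case True
  then obtain q where "j = p * q" by blast
  hence "om p ^ j = 1" using om_p[OF assms] by (simp add: power_mult)
  thus ?thesis using True by simp
next
  case False
  have "(om p ^ j) ^ p = 1" using om_p[OF assms] by (metis power_mult power_mult_distrib mult.commute power_one)
  thus ?thesis using False geometric_sum[OF om_ne1[OF assms False], of p] by simp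
qed

lemma dvd_iff_mod: assumes "r < p" shows "p dvd (w + p - r) \<longleftrightarrow> w mod p = (r::nat)"
proof
  assume "p dvd (w + p - r)"
  then obtain c where c: "w + p - r = p * c" by blast
  have pos: "w + p - r > 0" using assms by simp
  have "c \<noteq> 0" using c pos by (metis mult_0_right less_irrefl)
  then obtain c' where c': "c = Suc c'" by (cases c) auto
  have "w = p * c' + r" using c c' assms by simp
  thus "w mod p = r" using assms by simp
next
  assume a: "w mod p = r"
  have "w = p * (w div p) + r" using a div_mult_mod_eq[of w p] by (simp add: mult.commute)
  hence "w + p - r = p * (Suc (w div p))" by simp
  thus "p dvd (w + p - r)" by (metis dvd_triv_left)
qed

lemma indicator_fourier: assumes "r < p"
  shows "(if w mod p = r then 1 else 0) = (1 / of_nat p) * (\<Sum>k<p. (om p ^ k) ^ w * (om p ^ k) ^ (p - r))"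
proof -
  have p: "p > 0" using assms by simp
  have "(\<Sum>k<p. (om p ^ k) ^ w * (om p ^ k) ^ (p - r)) = (\<Sum>k<p. (om p ^ (w + p - r)) ^ k)"
  proof (rule sum.cong[OF refl])
    fix k
    have "w + p - r = w + (p - r)" using assms by simp
    thus "(om p ^ k) ^ w * (om p ^ k) ^ (p - r) = (om p ^ (w + p - r)) ^ k"
      by (simp add: power_add[symmetric] power_mult[symmetric] mult.commute distrib_left)
  qed
  thus ?thesis using root_sum[OF p, of "w + p - r"] dvd_iff_mod[OF assms] p by simp
qed

lemma sum_pow_hw: "(\<Sum>x\<in>bits N. z ^ hw x) = (1 + z :: complex) ^ N"
proof -
  have "(\<Sum>x\<in>bits N. z ^ hw x) = (\<Sum>x\<in>bits N. \<Prod>j<N. (if x ! j then z else 1))"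
    by (rule sum.cong[OF refl]) (simp add: prod_hw[symmetric] bits_def)
  also have "\<dots> = (\<Prod>j<N. 1 + z)" using sum_prod_bits[of "\<lambda>j a. if a then z else 1" N] by (simp add: add.commute)
  finally show ?thesis by simp
qed



lemma one_plus_om:
  assumes p: "p \<ge> 2" and k: "1 \<le> k" "k < p"
  shows "cmod (1 + om p ^ k) \<le> 2 * cos (pi / p)"
proof -
  have pr: "real p \<ge> 2" using p by simp
  define t where "t = 2 * pi * real k / real p"
  have e: "om p ^ k = cis t" unfolding om_pow t_def ..
  have "(cmod (1 + cis t))\<^sup>2 = (1 + cos t)\<^sup>2 + (sin t)\<^sup>2"
    by (simp add: cmod_power2 cis_eq)
  also have "\<dots> = 2 + 2 * cos t" by (simp add: power2_eq_square algebra_simps sin_squared_eq)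
  also have "cos t \<le> cos (2 * pi / p)"
  proof (cases "2 * k \<le> p")
    case True
    have "2 * pi / p \<le> t" unfolding t_def using k pr by (simp add: field_simps)
    moreover have "t \<le> pi" unfolding t_def using True pr
      by (simp add: field_simps)
    moreover have "0 \<le> 2 * pi / p" by simp
    moreover have "2 * pi / p \<le> pi" using pr by (simp add: field_simps)
    ultimately show ?thesis using cos_mono_le_eq[of t "2*pi/p"] by simp
  next
    case False
    define t' where "t' = 2 * pi * real (p - k) / real p"
    have tt: "t = 2 * pi - t'" unfolding t_def t'_def using k pr by (simp add: field_simps of_nat_diff)
    have "cos t = cos t'" unfolding tt by simp
    moreover have "2 * pi / p \<le> t'"
    proof -
      have "1 \<le> real (p-k)" using k by simp
      hence "2*pi*1/p \<le> 2*pi*real(p-k)/p" using pr by (intro divide_right_mono mult_left_mono) auto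
      thus ?thesis unfolding t'_def by simp
    qed
    moreover have "t' \<le> pi" unfolding t'_def using False pr
      by (simp add: field_simps of_nat_diff)
    moreover have "0 \<le> 2 * pi / p" by simp
    moreover have "2 * pi / p \<le> pi" using pr by (simp add: field_simps)
    ultimately show ?thesis using cos_mono_le_eq[of t' "2*pi/p"] by simp
  qed
  hence "2 + 2 * cos t \<le> 2 + 2 * cos (2 * pi / p)" by simp
  also have "2 * pi / p = 2 * (pi / p)" by simp
  also have "2 + 2 * cos (2 * (pi / p)) = (2 * cos (pi / p))\<^sup>2"
    unfolding cos_double_cos by (simp add: power2_eq_square algebra_simps)
  finally have sq: "(cmod (1 + om p ^ k))\<^sup>2 \<le> (2 * cos (pi / p))\<^sup>2" unfolding e .
  have a1: "0 \<le> pi / p" by simp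
  have a2: "pi / p \<le> pi / 2" using pr by (simp add: field_simps)
  have "0 \<le> cos (pi / p)" using a1 a2 by (intro cos_ge_zero) linarith+
  thus ?thesis using sq by (rule_tac power2_le_imp_le) auto
qed



lemma fourier_identity:
  assumes p: "p > 0"
  shows "complex_of_real (\<Sum>x\<in>bits N. gfun p (hw x mod p))
     = (1 / of_nat p) * (\<Sum>k<p. (\<Sum>r<p. complex_of_real (gfun p r) * (om p ^ k) ^ (p - r)) * (1 + om p ^ k) ^ N)"
proof -
  let ?w = "om p"
  have d: "complex_of_real (gfun p (w mod p)) = (\<Sum>r<p. complex_of_real (gfun p r) * (if w mod p = r then 1 else 0))" for w
  proof -
    have "(\<Sum>r<p. complex_of_real (gfun p r) * (if w mod p = r then 1 else 0))
        = (\<Sum>r<p. (if w mod p = r then complex_of_real (gfun p r) else 0))"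
      by (rule sum.cong) auto
    also have "\<dots> = complex_of_real (gfun p (w mod p))" using p by (simp add: sum.delta)
    finally show ?thesis by simp
  qed
  have "complex_of_real (\<Sum>x\<in>bits N. gfun p (hw x mod p)) = (\<Sum>x\<in>bits N. complex_of_real (gfun p (hw x mod p)))"
    by simp
  also have "\<dots> = (\<Sum>x\<in>bits N. \<Sum>r<p. complex_of_real (gfun p r) * (if hw x mod p = r then 1 else 0))"
    by (simp only: d)
  also have "\<dots> = (\<Sum>x\<in>bits N. \<Sum>r<p. \<Sum>k<p. (1 / of_nat p) * (complex_of_real (gfun p r) * (?w ^ k) ^ (p - r)) * (?w ^ k) ^ hw x)"
  proof (intro sum.cong refl)
    fix x r assume "r \<in> {..<p}"
    hence r: "r < p" by simp
    show "complex_of_real (gfun p r) * (if hw x mod p = r then 1 else 0)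
        = (\<Sum>k<p. (1 / of_nat p) * (complex_of_real (gfun p r) * (?w ^ k) ^ (p - r)) * (?w ^ k) ^ hw x)"
      unfolding indicator_fourier[OF r] by (simp add: sum_distrib_left algebra_simps)
  qed
  also have "\<dots> = (\<Sum>r<p. \<Sum>x\<in>bits N. \<Sum>k<p. (1 / of_nat p) * (complex_of_real (gfun p r) * (?w ^ k) ^ (p - r)) * (?w ^ k) ^ hw x)"
    by (rule sum.swap)
  also have "\<dots> = (\<Sum>r<p. \<Sum>k<p. \<Sum>x\<in>bits N. (1 / of_nat p) * (complex_of_real (gfun p r) * (?w ^ k) ^ (p - r)) * (?w ^ k) ^ hw x)"
    by (rule sum.cong[OF refl], rule sum.swap)
  also have "\<dots> = (\<Sum>k<p. \<Sum>r<p. \<Sum>x\<in>bits N. (1 / of_nat p) * (complex_of_real (gfun p r) * (?w ^ k) ^ (p - r)) * (?w ^ k) ^ hw x)"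
    by (rule sum.swap)
  also have "\<dots> = (\<Sum>k<p. \<Sum>r<p. (1 / of_nat p) * (complex_of_real (gfun p r) * (?w ^ k) ^ (p - r)) * (1 + ?w ^ k) ^ N)"
    by (simp only: sum_distrib_left[symmetric] sum_pow_hw)
  also have "\<dots> = (1 / of_nat p) * (\<Sum>k<p. (\<Sum>r<p. complex_of_real (gfun p r) * (?w ^ k) ^ (p - r)) * (1 + ?w ^ k) ^ N)"
    by (simp add: sum_distrib_left sum_distrib_right mult.assoc)
  finally show ?thesis .
qed

lemma gfun_abs: "\<bar>gfun p r\<bar> \<le> 1"
  unfolding gfun_def by (auto simp: abs_mult)

lemma fourier_bound:
  assumes p: "p \<ge> 2"
  shows "(\<Sum>x\<in>bits N. gfun p (hw x mod p)) \<ge> 2^N * ((\<Sum>r<p. gfun p r) / p - p * cos (pi/p) ^ N)"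
proof -
  define S where "S = (\<Sum>x\<in>bits N. gfun p (hw x mod p))"
  define T where "T = (\<Sum>r<p. gfun p r)"
  define c where "c = cos (pi / p)"
  define A where "A k = (\<Sum>r<p. complex_of_real (gfun p r) * (om p ^ k) ^ (p - r))" for k
  define B where "B k = (1 + om p ^ k) ^ N" for k
  define R where "R = (\<Sum>k\<in>{1..<p}. A k * B k)"
  have p0: "p > 0" using p by simp
  have c0: "c \<ge> 0"
  proof -
    have a1: "0 \<le> pi / p" by simp
    have a2: "pi / p \<le> pi / 2" using p by (simp add: field_simps)
    show ?thesis unfolding c_def using a1 a2 by (intro cos_ge_zero) linarith+
  qed
  have id: "complex_of_real S = (1 / of_nat p) * (A 0 * B 0 + R)"
  proof -
    have "(\<Sum>k<p. A k * B k) = A 0 * B 0 + R"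
      unfolding R_def lessThan_atLeast0 using p0 by (simp add: sum.atLeast_Suc_lessThan)
    thus ?thesis unfolding S_def fourier_identity[OF p0] A_def B_def by simp
  qed
  have A0: "A 0 = complex_of_real T" unfolding A_def T_def by simp
  have B0: "B 0 = 2 ^ N" unfolding B_def by simp
  have "S = Re (complex_of_real S)" by simp
  also have "\<dots> = (T * 2^N + Re R) / p" unfolding id A0 B0 by (simp add: field_simps)
  finally have Sx: "S = (T * 2^N + Re R) / p" .
  have nA: "cmod (A k) \<le> p" for k
  proof -
    have "cmod (A k) \<le> (\<Sum>r<p. cmod (complex_of_real (gfun p r) * (om p ^ k) ^ (p - r)))"
      unfolding A_def by (rule norm_sum)
    also have "\<dots> = (\<Sum>r<p. \<bar>gfun p r\<bar>)" by (simp add: norm_mult norm_power om_def)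
    also have "\<dots> \<le> (\<Sum>r<p. 1)" by (rule sum_mono) (rule gfun_abs)
    finally show ?thesis by simp
  qed
  have nB: "cmod (B k) \<le> (2 * c) ^ N" if "k \<in> {1..<p}" for k
  proof -
    have "cmod (1 + om p ^ k) \<le> 2 * c" unfolding c_def using that p by (intro one_plus_om) auto
    thus ?thesis unfolding B_def norm_power by (intro power_mono) auto
  qed
  have "cmod R \<le> (\<Sum>k\<in>{1..<p}. cmod (A k) * cmod (B k))"
    unfolding R_def by (rule order.trans[OF norm_sum]) (simp add: norm_mult)
  also have "\<dots> \<le> (\<Sum>k\<in>{1..<p}. p * (2 * c) ^ N)"
    by (rule sum_mono) (intro mult_mono nA nB; simp)
  also have "\<dots> = (p - 1) * p * (2 * c) ^ N" by (simp add: of_nat_diff)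
  also have "\<dots> \<le> p * p * (2 * c) ^ N"
  proof -
    have "real (p-1) * real p \<le> real p * real p" by (intro mult_right_mono) auto
    thus ?thesis using c0 by (intro mult_right_mono) auto
  qed
  finally have nR: "cmod R \<le> p * p * (2 * c) ^ N" .
  have "- cmod R \<le> Re R" using abs_Re_le_cmod[of R] by linarith
  hence "S \<ge> (T * 2^N - p * p * (2 * c) ^ N) / p" unfolding Sx using nR p0
    by (intro divide_right_mono) auto
  also have "(T * 2^N - p * p * (2 * c) ^ N) / p = 2^N * (T / p - p * c ^ N)"
    using p0 by (simp add: field_simps power_mult_distrib)
  finally show ?thesis unfolding S_def T_def c_def .
qed



lemma telescope: "(\<Sum>r<n. 2 * sin (x/2) * sin (real r * x)) = cos (x/2) - cos ((real n - 1/2) * x)"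
proof (induction n)
  case 0 thus ?case by simp
next
  case (Suc n)
  have "2 * sin (x/2) * sin (real n * x) = cos (x/2 - real n * x) - cos (x/2 + real n * x)"
    by (simp add: mult.assoc sin_times_sin)
  also have "cos (x/2 - real n * x) = cos ((real n - 1/2) * x)"
  proof -
    have "x/2 - real n * x = - ((real n - 1/2) * x)" by (simp add: algebra_simps)
    thus ?thesis by (simp only: cos_minus)
  qed
  also have "x/2 + real n * x = (real (Suc n) - 1/2) * x" by (simp add: algebra_simps)
  finally show ?case using Suc by simp
qed

lemma T_sum:
  assumes odd: "odd p" and p3: "p \<ge> 3"
  shows "(\<Sum>r<p. gfun p r) = (1 + cos (pi/p)) / sin (pi/p)"
proof -
  define q where "q = p div 2"
  have pq: "p = 2*q+1" using odd unfolding q_def by simp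
  have pr: "real p = 2 * real q + 1" using pq by simp
  define f where "f r = sin (real r * (2*pi/p))" for r
  have g1: "gfun p r = f r" if "r \<le> q" for r
  proof -
    have "real r < real p / 2" using that pr by simp
    thus ?thesis unfolding gfun_def f_def by (simp add: field_simps)
  qed
  have g2: "gfun p (p - s) = f s" if "1 \<le> s" "s \<le> q" for s
  proof -
    have "\<not> real (p - s) < real p / 2" using that pq by (simp add: of_nat_diff)
    hence "gfun p (p - s) = - sin (2 * pi * real (p - s) / real p)" unfolding gfun_def by simp
    also have "2 * pi * real (p - s) / real p = 2 * pi - real s * (2*pi/p)"
      using that pq by (simp add: of_nat_diff field_simps)
    finally show ?thesis unfolding f_def by simp
  qed
  have "(\<Sum>r<p. gfun p r) = (\<Sum>r\<in>{0..<q+1}. gfun p r) + (\<Sum>r\<in>{q+1..<p}. gfun p r)"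
    unfolding lessThan_atLeast0 by (rule sum.atLeastLessThan_concat[symmetric]) (use pq in auto)
  also have "(\<Sum>r\<in>{0..<q+1}. gfun p r) = (\<Sum>r\<in>{0..<q+1}. f r)"
    by (rule sum.cong) (auto simp: g1)
  also have "(\<Sum>r\<in>{q+1..<p}. gfun p r) = (\<Sum>s\<in>{1..q}. f s)"
  proof (rule sym, rule sum.reindex_bij_witness[of _ "\<lambda>r. p - r" "\<lambda>s. p - s"])
    show "\<And>s. s \<in> {1..q} \<Longrightarrow> gfun p (p - s) = f s" by (auto simp: g2)
  qed (use pq in auto)
  also have "(\<Sum>s\<in>{1..q}. f s) = (\<Sum>r\<in>{0..<q+1}. f r)"
  proof -
    have "(\<Sum>r\<in>{0..<q+1}. f r) = f 0 + (\<Sum>r\<in>{Suc 0..<q+1}. f r)" by (rule sum.atLeast_Suc_lessThan) simp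
    also have "{Suc 0..<q+1} = {1..q}" by auto
    also have "f 0 = 0" by (simp add: f_def)
    finally have X: "(\<Sum>r\<in>{0..<q+1}. f r) = 0 + (\<Sum>r\<in>{1..q}. f r)" .
    show ?thesis using X by (simp only: add_0_left)
  qed
  finally have T2: "(\<Sum>r<p. gfun p r) = 2 * (\<Sum>r<q+1. f r)" by (simp add: lessThan_atLeast0)
  define x where "x = 2*pi/p"
  have tel: "2 * sin (x/2) * (\<Sum>r<q+1. f r) = cos (x/2) + 1"
  proof -
    have "2 * sin (x/2) * (\<Sum>r<q+1. f r) = (\<Sum>r<q+1. 2 * sin (x/2) * sin (real r * x))"
      by (simp only: f_def x_def sum_distrib_left)
    also have "\<dots> = cos (x/2) - cos ((real (q+1) - 1/2) * x)" by (rule telescope)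
    also have "(real (q+1) - 1/2) * x = pi" unfolding x_def using pr by (simp add: field_simps)
    finally show ?thesis by simp
  qed
  have x2: "x/2 = pi/p" unfolding x_def by simp
  have spos: "sin (pi/p) > 0" using p3 by (intro sin_gt_zero) (auto simp: field_simps)
  show ?thesis unfolding T2 using tel spos unfolding x2 by (simp add: field_simps)
qed

lemma T_bound:
  assumes odd: "odd p" and p3: "p \<ge> 3"
  shows "(\<Sum>r<p. gfun p r) \<ge> 2 * p / pi - 1"
proof -
  define y where "y = pi / p"
  have pr: "real p \<ge> 3" using p3 by simp
  have y0: "0 < y" unfolding y_def using pr by simp
  have y2: "y \<le> 2" unfolding y_def using pr pi_less_4 by (simp add: field_simps)
  have s0: "sin y > 0" unfolding y_def using pr by (intro sin_gt_zero) (auto simp: field_simps)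
  have sy: "sin y \<le> y" using y0 by (intro sin_x_le_x) simp
  have cy: "1 - y \<le> cos y" using y0 y2 by (intro cos_lower) auto
  have "(2 - y) / y \<le> (1 + cos y) / y" using cy y0 by (intro divide_right_mono) auto
  also have "\<dots> \<le> (1 + cos y) / sin y" using s0 sy cy y2 by (intro divide_left_mono) (auto intro: mult_pos_pos)
  finally have "(2 - y) / y \<le> (1 + cos y) / sin y" .
  moreover have "(2 - y) / y = 2 * p / pi - 1" unfolding y_def using pr by (simp add: field_simps)
  ultimately show ?thesis unfolding T_sum[OF assms] y_def by simp
qed



theorem corollary4p5:
  shows "\<exists>C::real. \<forall>(p::nat) (m::nat) (D::nat).
           prime p \<and> odd p \<and> m \<ge> 1 \<and> D \<ge> 1 \<longrightarrow>
           (let n = D * m + 1 in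
              tv_dist n (meas_prob n (psi p m D)) (target_dist p n)
                \<le> 1/2 - 1/pi + 1 / (2 * real p)
                   + C * real p powr (3/2) * exp (- real n / (real p)\<^sup>2))"
proof (intro exI[of _ 2] allI impI)
  fix p m D :: nat
  assume a: "prime p \<and> odd p \<and> m \<ge> 1 \<and> D \<ge> 1"
  hence pp: "prime p" and po: "odd p" and m: "m \<ge> 1" by auto
  have p2: "p \<ge> 2" using prime_ge_2_nat[OF pp] .
  have p3: "p \<ge> 3" using p2 po by (cases "p = 2") auto
  have pr: "real p \<ge> 3" using p3 by simp
  define N where "N = D * m"
  define Sg where "Sg = (\<Sum>x\<in>bits N. gfun p (hw x mod p))"
  define T where "T = (\<Sum>r<p. gfun p r)"
  define c where "c = cos (pi / p)"
  define E where "E = exp (- real (N+1) / (real p)\<^sup>2)"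
  have tv: "tv_dist (N+1) (meas_prob (N+1) (psi p m D)) (target_dist p (N+1)) = (1/2) * (1/2)^N * (2^N - Sg)"
  proof -
    have "tv_dist (N+1) (meas_prob (N+1) (psi p m D)) (target_dist p (N+1))
       = (1/2) * (\<Sum>x\<in>bits N. (1/2)^N * (1 - gfun p (hw x mod p)))"
      unfolding tv_dist_def Suc_eq_plus1[symmetric] sum_bits_Suc
      using per_x[OF m, of _ D p] p2 by (simp add: N_def)
    also have "\<dots> = (1/2) * (1/2)^N * (2^N - Sg)"
      by (simp add: Sg_def sum_distrib_left[symmetric] sum_subtractf card_bits)
    finally show ?thesis .
  qed
  have Sb: "Sg \<ge> 2^N * (T / p - p * c ^ N)" unfolding Sg_def T_def c_def by (rule fourier_bound[OF p2])
  have Tb: "T \<ge> 2 * real p / pi - 1" unfolding T_def using T_bound[OF po p3] by simp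
  have st1: "tv_dist (N+1) (meas_prob (N+1) (psi p m D)) (target_dist p (N+1)) \<le> (1/2) * (1/2)^N * (2^N - 2^N * (T / p - p * c ^ N))"
    unfolding tv using Sb by (intro mult_left_mono) auto
  have st2: "(1/2) * (1/2)^N * (2^N - 2^N * (T / p - p * c ^ N)) = 1/2 - T / (2*p) + p/2 * c^N"
    using pr by (simp add: field_simps power_one_over)
  have st3: "T / (2*p) \<ge> 1/pi - 1/(2*p)"
  proof -
    have "T / (2*p) \<ge> (2 * real p / pi - 1) / (2*p)" using Tb pr by (intro divide_right_mono) auto
    also have "(2 * real p / pi - 1) / (2*p) = 1/pi - 1/(2*p)" using pr by (simp add: field_simps)
    finally show ?thesis .
  qed
  have cN: "c ^ N \<le> 3 * E"
  proof -
    have c0: "c \<ge> 0" unfolding c_def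
    proof -
      have a1: "0 \<le> pi / p" by simp
      have a2: "pi / p \<le> pi / 2" using pr by (simp add: field_simps)
      show "0 \<le> cos (pi / p)" using a1 a2 by (intro cos_ge_zero) linarith+
    qed
    have "c \<le> 1 - 1 / (real p)\<^sup>2" unfolding c_def by (rule cos_upper[OF p3])
    also have "\<dots> \<le> exp (- (1 / (real p)\<^sup>2))" using exp_ge_add_one_self[of "- (1 / (real p)\<^sup>2)"] by simp
    finally have "c ^ N \<le> exp (- (1 / (real p)\<^sup>2)) ^ N" using c0 by (intro power_mono) auto
    also have "\<dots> = exp (real N * (- (1 / (real p)\<^sup>2)))" by (rule exp_of_nat_mult[symmetric])
    also have "real N * (- (1 / (real p)\<^sup>2)) = 1 / (real p)\<^sup>2 + (- real (N+1) / (real p)\<^sup>2)"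
    proof -
      have "(real p)\<^sup>2 \<noteq> 0" using pr by simp
      thus ?thesis by (simp add: divide_simps)
    qed
    also have "exp \<dots> = exp (1 / (real p)\<^sup>2) * E" unfolding E_def by (rule exp_add)
    finally have c1: "c ^ N \<le> exp (1 / (real p)\<^sup>2) * E" .
    have e3: "exp (1 / (real p)\<^sup>2) \<le> 3"
    proof -
      have "1 / (real p)\<^sup>2 \<le> 1" using pr by (simp add: field_simps)
      hence "exp (1 / (real p)\<^sup>2) \<le> exp 1" by simp
      thus ?thesis using exp_le by linarith
    qed
    have "exp (1 / (real p)\<^sup>2) * E \<le> 3 * E" unfolding E_def using e3 by (intro mult_right_mono) auto
    with c1 show ?thesis by linarith
  qed
  hence st4: "p/2 * c^N \<le> p/2 * (3 * E)" by (intro mult_left_mono) auto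
  have st5: "p/2 * (3 * E) \<le> 2 * real p powr (3/2) * E"
  proof -
    have "real p = real p powr 1" using pr by simp
    also have "\<dots> \<le> real p powr (3/2)" using pr by (intro powr_mono) auto
    finally have "real p \<le> real p powr (3/2)" .
    moreover have "E \<ge> 0" unfolding E_def by simp
    ultimately have h: "real p * E \<le> real p powr (3/2) * E" by (rule mult_right_mono)
    have h2: "0 \<le> real p powr (3/2) * E" unfolding E_def by simp
    have eq: "p/2 * (3*E) = (3/2) * (real p * E)" by simp
    have eq2: "2 * real p powr (3/2) * E = 2 * (real p powr (3/2) * E)" by simp
    show ?thesis unfolding eq eq2 using h h2 by linarith
  qed
  have fin: "tv_dist (N+1) (meas_prob (N+1) (psi p m D)) (target_dist p (N+1))
      \<le> 1/2 - 1/pi + 1 / (2 * real p) + 2 * real p powr (3/2) * E"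
    using st1 st2 st3 st4 st5 by linarith
  show "let n = D * m + 1 in
              tv_dist n (meas_prob n (psi p m D)) (target_dist p n)
                \<le> 1/2 - 1/pi + 1 / (2 * real p)
                   + 2 * real p powr (3/2) * exp (- real n / (real p)\<^sup>2)"
    using fin unfolding Let_def N_def[symmetric] E_def by simp
qed

end
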